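(* Let $k\ge2$ be the cache size, let $1\le r\le k-1$ and $N=k+r$, with the pages being the vertices $1,2,\dots,N$ of the cycle $C_N$ in cyclic order. Let $x=\lfloor\log_2\frac Nr\rfloor$ and $X_r=r(x-1)+\lceil N/2^x\rceil$. For $n\ge1$ let $I_n=\langle 1,2,\dots,N\rangle^n$ (the sequence $1,2,\dots,N$ repeated $n$ times). When FAR (with respect to $C_N$) serves $I_n$, each $k$-phase except the first and possibly the last contains exactly $X_r$ faults, and \[\left\lfloor\frac{nN}{k}\right\rfloor X_r+k-X_r\le\mathrm{FAR}(I_n)\le\left\lfloor\frac{nN}{k}\right\rfloor X_r+k-1.\]
   Context: Paging: a cache holds at most $k$ pages and is initially empty. A request to a page in the cache is a hit; otherwise it is a fault, the page is brought into the cache, evicting a page first if the cache is full. $\mathrm{FAR}(I)$ is the number of faults of FAR on $I$. FAR (relative to the access graph): each requested page is marked; on a fault with a full cache, if all cached pages are marked it first unmarks all pages; it then evicts the unmarked cached page whose graph distance to the nearest marked page is largest, ties broken by evicting the least recently requested. $k$-phases: a request sequence is divided recursively: phase 0 is empty (and is ignored), and for $i\ge1$ phase $i$ is a maximal sequence following phase $i-1$ containing at most $k$ distinct pages. *)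

theory Defs
  imports Complex_Main
begin

(* Pages are natural numbers; the access graph is the cycle C_N on the vertices 1..N
   in cyclic order. Graph distance on C_N: *)
definition cyc_dist :: "nat \<Rightarrow> nat \<Rightarrow> nat \<Rightarrow> nat" where
  "cyc_dist N a b = (let d = (if a \<le> b then b - a else a - b) in min d (N - d))"

definition dist_marked :: "nat \<Rightarrow> nat set \<Rightarrow> nat \<Rightarrow> nat" where
  "dist_marked N M q = Min ((\<lambda>m. cyc_dist N q m) ` M)"

(* FAR state: (cache, marked pages, time of last request of each page, current time) *)
type_synonym far_state = "nat set \<times> nat set \<times> (nat \<Rightarrow> nat) \<times> nat"

definition far_victim :: "nat \<Rightarrow> nat set \<Rightarrow> nat set \<Rightarrow> (nat \<Rightarrow> nat) \<Rightarrow> nat" where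
  "far_victim N C M L = (SOME v. v \<in> C - M \<and>
      (\<forall>u \<in> C - M. dist_marked N M u < dist_marked N M v
                   \<or> (dist_marked N M u = dist_marked N M v \<and> L v \<le> L u)))"

definition far_step :: "nat \<Rightarrow> nat \<Rightarrow> far_state \<Rightarrow> nat \<Rightarrow> far_state \<times> bool" where
  "far_step k N s p = (case s of (C, M, L, t) \<Rightarrow>
     if p \<in> C then ((C, insert p M, L(p := t), Suc t), False)
     else if card C < k then ((insert p C, insert p M, L(p := t), Suc t), True)
     else (let M0 = (if C \<subseteq> M then {} else M);
               M1 = insert p M0;
               v = far_victim N C M1 L
           in ((insert p (C - {v}), M1, L(p := t), Suc t), True)))"

fun far_run :: "nat \<Rightarrow> nat \<Rightarrow> far_state \<Rightarrow> nat list \<Rightarrow> bool list" where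
  "far_run k N s [] = []"
| "far_run k N s (p # ps) = (let (s', f) = far_step k N s p in f # far_run k N s' ps)"

definition far_init :: far_state where
  "far_init = ({}, {}, (\<lambda>_. 0), 0)"

definition far_faults :: "nat \<Rightarrow> nat \<Rightarrow> nat list \<Rightarrow> bool list" where
  "far_faults k N I = far_run k N far_init I"

definition FAR :: "nat \<Rightarrow> nat \<Rightarrow> nat list \<Rightarrow> nat" where
  "FAR k N I = length (filter id (far_faults k N I))"

(* k-phases: greedy split into maximal consecutive blocks with at most k distinct pages *)
fun split_phases :: "nat \<Rightarrow> 'a list \<Rightarrow> 'a list \<Rightarrow> 'a list list" where
  "split_phases k cur [] = (if cur = [] then [] else [cur])"
| "split_phases k cur (x # xs) =
     (if card (set (x # cur)) \<le> k then split_phases k (cur @ [x]) xs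
      else cur # split_phases k [x] xs)"

definition k_phases :: "nat \<Rightarrow> 'a list \<Rightarrow> 'a list list" where
  "k_phases k I = split_phases k [] I"

fun chop_by :: "nat list \<Rightarrow> 'b list \<Rightarrow> 'b list list" where
  "chop_by [] ys = []"
| "chop_by (l # ls) ys = take l ys # chop_by ls (drop l ys)"

definition phase_faults :: "nat \<Rightarrow> nat \<Rightarrow> nat list \<Rightarrow> nat list" where
  "phase_faults k N I =
     map (\<lambda>c. length (filter id c)) (chop_by (map length (k_phases k I)) (far_faults k N I))"

end

theory Submission
  imports Defs
begin


lemma argmax_arith:
  fixes N D r t u D' :: nat
  assumes "2*r \<le> D" "D \<le> N" "t < r" "D' = (D+1) div 2"
    and "N - D + t < u" "u < N" "u \<ge> N - D + r"
    and "u < N - D' \<or> u \<ge> N - D' + t"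
  shows "min (u - (N-D+t)) (N-u) < min (N - D' + t - (N-D+t)) (N - (N - D' + t))
     \<or> (min (u - (N-D+t)) (N-u) = min (N - D' + t - (N-D+t)) (N - (N - D' + t))
         \<and> N - D' + t \<le> u)"
proof -
  have h: "2*D' = D+1 \<or> 2*D' = D" using assms(4) by linarith
  have Dr: "D' \<ge> r" using h assms(1) by linarith
  have e1: "N - D' + t - (N-D+t) = D - D'" using h assms(2) by linarith
  have e2: "N - (N - D' + t) = D' - t" using h assms(2,3) Dr by linarith
  have gv: "min (D - D') (D' - t) \<ge> D' - t - 1" using h by linarith
  have "min (u - (N-D+t)) (N-u) < min (D - D') (D' - t)
     \<or> (min (u - (N-D+t)) (N-u) = min (D - D') (D' - t) \<and> N - D' + t \<le> u)"
  proof (cases "u < N - D'")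
    case True
    have "u - (N-D+t) < D - D'" using True assms(2,5) h by linarith
    moreover have "u - (N-D+t) < D' - t" using True assms(2,5) h Dr assms(3) by linarith
    ultimately show ?thesis by (simp add: min.strict_coboundedI1)
  next
    case False
    then have u: "u \<ge> N - D' + t" using assms(8) by simp
    show ?thesis
    proof (cases "u = N - D' + t")
      case True
      then have "u - (N-D+t) = D - D'" "N - u = D' - t" using e1 e2 by auto
      then show ?thesis using True by simp
    next
      case False
      then have "N - u \<le> D' - t - 1" using u assms(6) h assms(2) by linarith
      then have "min (u - (N-D+t)) (N-u) \<le> min (D - D') (D' - t)" using gv by linarith
      then show ?thesis using u by linarith
    qed
  qed
  then show ?thesis by (simp only: e1 e2)
qed

fun dd :: "nat \<Rightarrow> nat \<Rightarrow> nat" where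
  "dd N 0 = N" | "dd N (Suc i) = (dd N i + 1) div 2"

definition gval :: "nat \<Rightarrow> nat \<Rightarrow> nat \<Rightarrow> nat" where
  "gval N j u = min (u - j) (N - u)"
definition cand :: "nat \<Rightarrow> nat \<Rightarrow> nat set \<Rightarrow> nat set" where
  "cand N j H = {j<..<N} - H"
definition isvic :: "nat \<Rightarrow> nat \<Rightarrow> nat set \<Rightarrow> nat \<Rightarrow> bool" where
  "isvic N j H v = (v \<in> cand N j H \<and> (\<forall>u\<in>cand N j H. gval N j u < gval N j v \<or> (gval N j u = gval N j v \<and> v \<le> u)))"
definition avic :: "nat \<Rightarrow> nat \<Rightarrow> nat set \<Rightarrow> nat" where
  "avic N j H = (SOME v. isvic N j H v)"

fun habs :: "nat \<Rightarrow> nat \<Rightarrow> nat \<Rightarrow> nat set" where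
  "habs N r 0 = {..<r}"
| "habs N r (Suc j) = (if j \<in> habs N r j then insert (avic N j (habs N r j)) (habs N r j - {j}) else habs N r j)"

fun cnt :: "nat \<Rightarrow> nat \<Rightarrow> nat \<Rightarrow> nat" where
  "cnt N r 0 = 0"
| "cnt N r (Suc j) = cnt N r j + (if j \<in> habs N r j then 1 else 0)"

lemma isvic_unique: "isvic N j H v \<Longrightarrow> isvic N j H w \<Longrightarrow> v = w"
proof -
  assume a: "isvic N j H v" and b: "isvic N j H w"
  have 1: "gval N j w < gval N j v \<or> (gval N j w = gval N j v \<and> v \<le> w)" using a b unfolding isvic_def by blast
  have 2: "gval N j v < gval N j w \<or> (gval N j v = gval N j w \<and> w \<le> v)" using a b unfolding isvic_def by blast
  show "v = w" using 1 2 by linarith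
qed

lemma avic_eq: "isvic N j H v \<Longrightarrow> avic N j H = v"
  unfolding avic_def using isvic_unique by (metis someI_ex)

lemma isvic_ex:
  assumes "cand N j H \<noteq> {}"
  shows "\<exists>v. isvic N j H v"
proof -
  let ?S = "cand N j H"
  have fin: "finite ?S" unfolding cand_def by auto
  let ?m = "Max (gval N j ` ?S)"
  let ?T = "{u\<in>?S. gval N j u = ?m}"
  have "?m \<in> gval N j ` ?S" using fin assms by (intro Max_in) auto
  then have Tne: "?T \<noteq> {}" by auto
  have finT: "finite ?T" using fin by auto
  let ?v = "Min ?T"
  have vT: "?v \<in> ?T" using Min_in[OF finT Tne] .
  have "isvic N j H ?v"
    unfolding isvic_def
  proof (intro conjI ballI)
    show "?v \<in> ?S" using vT by auto
    fix u assume u: "u \<in> ?S"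
    have "gval N j u \<le> ?m" using fin u by (intro Max_ge) auto
    moreover have "gval N j u = ?m \<Longrightarrow> ?v \<le> u" using finT u by (intro Min_le) auto
    ultimately show "gval N j u < gval N j ?v \<or> (gval N j u = gval N j ?v \<and> ?v \<le> u)"
      using vT by auto
  qed
  then show ?thesis by blast
qed

lemma avic_isvic: "cand N j H \<noteq> {} \<Longrightarrow> isvic N j H (avic N j H)"
  unfolding avic_def using isvic_ex someI_ex by metis

lemma habs_gen:
  assumes "r < N"
  shows "j \<le> N - r \<Longrightarrow> habs N r j \<subseteq> {j..<N} \<and> finite (habs N r j) \<and> card (habs N r j) = r"
proof (induction j)
  case 0
  then show ?case using assms by auto
next
  case (Suc j)
  let ?H = "habs N r j"
  have IH: "?H \<subseteq> {j..<N}" "finite ?H" "card ?H = r" using Suc by auto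
  show ?case
  proof (cases "j \<in> ?H")
    case False
    then show ?thesis using IH by (auto simp: subset_iff Suc_le_eq order.order_iff_strict)
  next
    case True
    have "card (?H - {j}) = r - 1" using IH True by auto
    moreover have "?H - {j} \<subseteq> {j<..<N}" using IH by auto
    ultimately have "card ({j<..<N} - (?H - {j})) = (N - Suc j) - (r - 1)"
      using IH by (simp add: card_Diff_subset)
    moreover have "card ?H > 0" using IH(2) True by (auto simp: card_gt_0_iff)
    then have r1': "r \<ge> 1" using IH(3) by simp
    then have "(N - Suc j) - (r - 1) > 0" using Suc.prems by linarith
    ultimately have "{j<..<N} - (?H - {j}) \<noteq> {}" by (metis card.empty less_irrefl)
    then have ne: "cand N j ?H \<noteq> {}" unfolding cand_def by auto
    have iv: "isvic N j ?H (avic N j ?H)" by (rule avic_isvic[OF ne])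
    then have "avic N j ?H \<in> {j<..<N} - ?H" unfolding isvic_def cand_def by auto
    then show ?thesis using IH True r1' by (auto simp: card_insert_if)
  qed
qed


lemma dd_char: "1 \<le> N \<Longrightarrow> N \<le> dd N i * 2^i \<and> (dd N i - 1) * 2^i < N"
proof (induction i)
  case 0 then show ?case by simp
next
  case (Suc i)
  let ?d = "dd N i"
  have a: "N \<le> ?d * 2^i" "(?d - 1) * 2^i < N" using Suc by auto
  have "?d \<le> 2 * ((?d+1) div 2)" by linarith
  then have "?d * 2^i \<le> (2 * ((?d+1) div 2)) * 2^i" by (rule mult_right_mono) simp
  moreover have "dd N (Suc i) * 2^Suc i = (2 * ((?d+1) div 2)) * 2^i" by simp
  ultimately have 1: "N \<le> dd N (Suc i) * 2^Suc i" using a(1) by linarith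
  have "2 * ((?d+1) div 2 - 1) \<le> ?d - 1" by linarith
  then have "(2 * ((?d+1) div 2 - 1)) * 2^i \<le> (?d - 1) * 2^i" by (rule mult_right_mono) simp
  moreover have "(dd N (Suc i) - 1) * 2^Suc i = (2 * ((?d+1) div 2 - 1)) * 2^i" by simp
  ultimately have 2: "(dd N (Suc i) - 1) * 2^Suc i < N" using a(2) by linarith
  show ?case using 1 2 by simp
qed

lemma dd_le: "dd N i \<le> N"
  by (induction i) auto

locale setting =
  fixes N r x :: nat
  assumes r1: "1 \<le> r" and r2: "2*r < N" and xlo: "r * 2^x \<le> N" and xhi: "N < r * 2^(Suc x)"
begin

abbreviation "k \<equiv> N - r"
abbreviation "aa i \<equiv> N - dd N i"
abbreviation "H j \<equiv> habs N r j"
abbreviation "C j \<equiv> cnt N r j"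

lemma N1: "1 \<le> N" using r1 r2 by linarith

lemma x1: "1 \<le> x"
proof (rule ccontr)
  assume "\<not> 1 \<le> x" then have "x = 0" by simp
  then show False using xhi r2 by simp
qed

lemma dd_big: "i < x \<Longrightarrow> 2*r \<le> dd N i"
proof -
  assume i: "i < x"
  have e: "(2::nat)^x = 2^(x-i)*2^i" using i by (simp add: power_add[symmetric])
  have "2 \<le> (2::nat)^(x-i)"
  proof -
    obtain m where "x - i = Suc m" using i by (metis Suc_diff_Suc)
    then show ?thesis by simp
  qed
  then have "(2 * r) * 2^i \<le> (2^(x-i) * r) * 2^i" by (intro mult_right_mono) simp_all
  also have "\<dots> = r * 2^x" by (simp add: e mult_ac)
  finally have "2 * r * 2^i \<le> r * 2^x" .
  also have "\<dots> \<le> dd N i * 2^i" using xlo dd_char[OF N1, of i] by linarith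
  finally show ?thesis by simp
qed

lemma ddx_lo: "r \<le> dd N x"
proof -
  have "r * 2^x \<le> dd N x * 2^x" using xlo dd_char[OF N1, of x] by linarith
  then show ?thesis by simp
qed

lemma ddx_hi: "dd N x \<le> 2*r"
proof -
  have "r * 2^(Suc x) = (2*r)*2^x" by simp
  then have "(dd N x - 1) * 2^x < (2*r)*2^x" using xhi dd_char[OF N1, of x] by linarith
  then have "dd N x - 1 < 2*r" using mult_less_cancel2 by blast
  then show ?thesis by simp
qed

lemma aa_sep: "i < x \<Longrightarrow> aa i + r \<le> aa (Suc i)"
  using dd_big[of i] dd_le[of N i] by simp

lemma lev_step:
  assumes i: "i < x" and base: "H (aa i) = {aa i..<aa i + r}"
  shows "t \<le> r \<Longrightarrow> H (aa i + t) = {aa i + t..<aa i + r} \<union> {aa (Suc i)..<aa (Suc i) + t}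
            \<and> C (aa i + t) = C (aa i) + t"
proof (induction t)
  case 0 then show ?case using base by simp
next
  case (Suc t)
  define D where "D = dd N i"
  define D' where "D' = dd N (Suc i)"
  have DD': "D' = (D+1) div 2" by (simp add: D_def D'_def)
  have D2: "2*r \<le> D" using dd_big[OF i] by (simp add: D_def)
  have DN: "D \<le> N" by (simp add: D_def dd_le)
  let ?j = "aa i + t"
  let ?v = "aa (Suc i) + t"
  have tr: "t < r" using Suc by simp
  have Hj: "H ?j = {?j..<aa i + r} \<union> {aa (Suc i)..<aa (Suc i) + t}" and Cj: "C ?j = C (aa i) + t"
    using Suc by auto
  have jin: "?j \<in> H ?j" using Hj tr by simp
  have vc: "?v \<in> cand N ?j (H ?j)" unfolding cand_def Hj
    using D2 DN tr DD' D_def D'_def by auto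
  have iv: "isvic N ?j (H ?j) ?v"
    unfolding isvic_def
  proof (intro conjI ballI vc)
    fix u assume u: "u \<in> cand N ?j (H ?j)"
    then have u1: "N - D + t < u" "u < N" "u \<ge> N - D + r" "u < N - D' \<or> u \<ge> N - D' + t"
      unfolding cand_def Hj D_def D'_def by auto
    show "gval N ?j u < gval N ?j ?v \<or> (gval N ?j u = gval N ?j ?v \<and> ?v \<le> u)"
      unfolding gval_def D_def[symmetric] D'_def[symmetric]
      using argmax_arith[OF D2 DN tr DD' u1] DN by (simp add: add.commute)
  qed
  have av: "avic N ?j (H ?j) = ?v" using avic_eq[OF iv] .
  have sep: "aa i + r \<le> aa (Suc i)" using aa_sep[OF i] .
  have "H (Suc ?j) = insert ?v (H ?j - {?j})" using jin av by simp
  also have "\<dots> = {Suc ?j..<aa i + r} \<union> {aa (Suc i)..<aa (Suc i) + Suc t}"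
    unfolding Hj using sep tr by auto
  finally show ?case using Cj jin by simp
qed

lemma lev_gap:
  assumes i: "i < x" and base: "H (aa i + r) = {aa (Suc i)..<aa (Suc i) + r}"
  shows "aa i + r + g \<le> aa (Suc i) \<Longrightarrow> H (aa i + r + g) = {aa (Suc i)..<aa (Suc i) + r}
            \<and> C (aa i + r + g) = C (aa i + r)"
proof (induction g)
  case 0 then show ?case using base by simp
next
  case (Suc g)
  let ?j = "aa i + r + g"
  have IH: "H ?j = {aa (Suc i)..<aa (Suc i) + r}" "C ?j = C (aa i + r)" using Suc by auto
  have nin: "?j \<notin> H ?j" using IH Suc.prems by simp
  have eH: "H (Suc ?j) = H ?j" using nin by simp
  have eC: "C (Suc ?j) = C ?j" using nin by simp
  show ?case by (simp only: add_Suc_right eH eC IH simp_thms)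
qed

lemma lev_all: "i \<le> x \<Longrightarrow> H (aa i) = {aa i..<aa i + r} \<and> C (aa i) = i * r"
proof (induction i)
  case 0 then show ?case by auto
next
  case (Suc i)
  then have i: "i < x" and IH: "H (aa i) = {aa i..<aa i + r}" "C (aa i) = i * r" by auto
  have s: "H (aa i + r) = {aa (Suc i)..<aa (Suc i) + r}" "C (aa i + r) = i*r + r"
    using lev_step[OF i IH(1), of r] IH(2) by auto
  have sep: "aa i + r \<le> aa (Suc i)" using aa_sep[OF i] .
  obtain g where g: "aa (Suc i) = aa i + r + g" using sep le_Suc_ex by blast
  have "H (aa i + r + g) = {aa (Suc i)..<aa (Suc i) + r} \<and> C (aa i + r + g) = C (aa i + r)"
    using lev_gap[OF i s(1), of g] g by simp
  then show ?case using s(2) g by simp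
qed

lemma lev_x: "aa x + t \<le> k \<Longrightarrow> {aa x + t..<k} \<subseteq> H (aa x + t) \<and> C (aa x + t) = x * r + t"
proof (induction t)
  case 0
  have "aa x + r \<ge> k" using ddx_hi by simp
  then show ?case using lev_all[of x] by auto
next
  case (Suc t)
  let ?j = "aa x + t"
  have IH: "{?j..<k} \<subseteq> H ?j" "C ?j = x*r + t" using Suc by auto
  have jin: "?j \<in> H ?j" using IH Suc.prems by auto
  have "{Suc ?j..<k} \<subseteq> H (Suc ?j)" using IH jin by auto
  then show ?case using IH jin by simp
qed

lemma cnt_k: "C k = r * (x - 1) + dd N x"
proof -
  have a: "aa x \<le> k" using ddx_lo by simp
  have "C (aa x + (k - aa x)) = x*r + (k - aa x)" using lev_x[of "k - aa x"] a by simp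
  moreover have "aa x + (k - aa x) = k" using a by simp
  ultimately have "C k = x*r + (k - aa x)" by simp
  also have "\<dots> = r * (x - 1) + dd N x"
  proof -
    obtain y where y: "x = Suc y" using x1 by (cases x) auto
    have "k - aa x = dd N x - r" using ddx_lo dd_le[of N x] r2 by simp
    then show ?thesis using y ddx_lo by (simp add: algebra_simps)
  qed
  finally show ?thesis .
qed

lemma last_fault: "k - 1 \<in> H (k - 1)"
proof (cases "aa x < k")
  case True
  have "{aa x + (k - 1 - aa x)..<k} \<subseteq> H (aa x + (k - 1 - aa x))" using lev_x[of "k-1-aa x"] True by simp
  moreover have "aa x + (k - 1 - aa x) = k - 1" using True by simp
  ultimately show ?thesis using True by auto
next
  case False
  then have ddx: "dd N x = r" using ddx_lo dd_le[of N x] by linarith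
  obtain y where y: "x = Suc y" using x1 by (cases x) auto
  have "(dd N y + 1) div 2 = r" using ddx y by simp
  moreover have "2*r \<le> dd N y" using dd_big[of y] y by simp
  ultimately have dy: "dd N y = 2*r" by linarith
  have "H (aa y + (r - 1)) = {aa y + (r - 1)..<aa y + r} \<union> {aa (Suc y)..<aa (Suc y) + (r - 1)}"
    using lev_step[of y "r - 1"] lev_all[of y] y by auto
  moreover have "aa y + (r - 1) = k - 1" using dy r1 r2 by simp
  ultimately show ?thesis using r1 by auto
qed

lemma cnt_mono: "j \<le> j' \<Longrightarrow> C j \<le> C j'"
  by (induction j' ) (auto simp: le_Suc_eq)

end



context setting begin

definition pg :: "nat \<Rightarrow> nat \<Rightarrow> nat" where
  "pg P q = (q + k*P) mod N + 1"

lemma kN: "k + r = N" "0 < k" "r < k" using r1 r2 by auto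

lemma mod2: "y < 2*N \<Longrightarrow> y mod N = (if y < N then y else y - N)"
  by (simp add: mod_if le_mod_geq)

lemma pg_eq: "q < N \<Longrightarrow> pg P q = (if q + (k*P) mod N < N then q + (k*P) mod N else q + (k*P) mod N - N) + 1"
proof -
  assume q: "q < N"
  have "(k*P) mod N < N" using N1 by simp
  then have "(q + (k*P) mod N) mod N = (if q + (k*P) mod N < N then q + (k*P) mod N else q + (k*P) mod N - N)"
    using q by (intro mod2) linarith
  then show ?thesis unfolding pg_def by (simp add: mod_add_right_eq)
qed

lemma pg_inj: "inj_on (pg P) {..<N}"
proof (rule inj_onI)
  fix a b assume a: "a \<in> {..<N}" and b: "b \<in> {..<N}" and e: "pg P a = pg P b"
  have c: "(k*P) mod N < N" using N1 by simp
  show "a = b" using e pg_eq[of a P] pg_eq[of b P] a b c by (simp split: if_splits; arith)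
qed

lemma pg_range: "pg P q \<in> {1..N}"
proof -
  have "(q + k*P) mod N < N" using N1 by simp
  then show ?thesis by (simp add: pg_def)
qed

lemma cyc_pg:
  assumes "q' < q" "q < N"
  shows "cyc_dist N (pg P q) (pg P q') = min (q - q') (N - (q - q'))"
proof -
  define c where "c = (k*P) mod N"
  have c: "c < N" using N1 by (simp add: c_def)
  have e1: "pg P q = (if q + c < N then q + c else q + c - N) + 1"
    using pg_eq[of q P] assms by (simp add: c_def)
  have e2: "pg P q' = (if q' + c < N then q' + c else q' + c - N) + 1"
    using pg_eq[of q' P] assms by (simp add: c_def)
  show ?thesis
  proof (cases "q + c < N")
    case True
    then have "q' + c < N" using assms by linarith
    then have "pg P q = q + c + 1" "pg P q' = q' + c + 1" using e1 e2 True by auto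
    then show ?thesis unfolding cyc_dist_def Let_def using assms by simp
  next
    case False
    show ?thesis
    proof (cases "q' + c < N")
      case True
      then have "pg P q = q + c - N + 1" "pg P q' = q' + c + 1" using e1 e2 False by auto
      moreover have "q + c - N + 1 \<le> q' + c + 1" using assms c by linarith
      ultimately show ?thesis unfolding cyc_dist_def Let_def using assms c False True
        by (simp add: min.commute)
    next
      case F2: False
      then have "pg P q = q + c - N + 1" "pg P q' = q' + c - N + 1" using e1 e2 False by auto
      then show ?thesis unfolding cyc_dist_def Let_def using assms False F2 by simp
    qed
  qed
qed

lemma dist_pg:
  assumes "j < q" "q < N"
  shows "dist_marked N (pg P ` {..<Suc j}) (pg P q) = gval N j q"
proof -
  let ?S = "(\<lambda>q'. cyc_dist N (pg P q) (pg P q')) ` {..<Suc j}"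
  have S: "(\<lambda>m. cyc_dist N (pg P q) m) ` pg P ` {..<Suc j} = ?S" by (simp add: image_image)
  have fin: "finite ?S" by simp
  have ne: "?S \<noteq> {}" by auto
  have vals: "\<And>q'. q' \<le> j \<Longrightarrow> cyc_dist N (pg P q) (pg P q') = min (q - q') (N - (q - q'))"
    using cyc_pg assms by simp
  have lo: "\<forall>y\<in>?S. gval N j q \<le> y"
    using vals assms by (auto simp: gval_def min_def)
  have "Min ?S \<le> cyc_dist N (pg P q) (pg P j)" by (rule Min_le[OF fin]) auto
  then have "Min ?S \<le> min (q - j) (N - (q - j))" using vals[of j] by simp
  moreover have "Min ?S \<le> cyc_dist N (pg P q) (pg P 0)" by (rule Min_le[OF fin]) auto
  then have "Min ?S \<le> min q (N - q)" using vals[of 0] by simp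
  ultimately have "Min ?S \<le> gval N j q" using assms by (auto simp: gval_def min_def split: if_splits)
  moreover have "gval N j q \<le> Min ?S" using lo Min_in[OF fin ne] by blast
  ultimately show ?thesis unfolding dist_marked_def S by simp
qed

definition INV :: "nat \<Rightarrow> nat \<Rightarrow> far_state \<Rightarrow> bool" where
  "INV P j s = (case s of (Cc, M, L, t) \<Rightarrow> t = k*P + j \<and> Cc = pg P ` ({..<N} - H j)
     \<and> M = (if j = 0 then Cc else pg P ` {..<j})
     \<and> (\<forall>q<N. q \<notin> H j \<longrightarrow> (q < j \<longrightarrow> L (pg P q) = k*P + q) \<and> (j \<le> q \<longrightarrow> L (pg P q) + N = k*P + q)))"

lemma Hgen: "j \<le> k \<Longrightarrow> H j \<subseteq> {j..<N} \<and> finite (H j) \<and> card (H j) = r"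
  using habs_gen[of r N j] r2 by simp

lemma victim:
  assumes inv: "INV P j (Cc, M, L, t)" and jk: "j < k" and jH: "j \<in> H j"
  shows "far_victim N Cc (pg P ` {..<Suc j}) L = pg P (avic N j (H j))"
proof -
  have Cc: "Cc = pg P ` ({..<N} - H j)" and
    Lc: "\<And>q. q < N \<Longrightarrow> q \<notin> H j \<Longrightarrow> j \<le> q \<Longrightarrow> L (pg P q) + N = k*P + q"
    using inv by (auto simp: INV_def)
  have hg: "H j \<subseteq> {j..<N}" "finite (H j)" "card (H j) = r" using Hgen jk by auto
  have CM: "Cc - pg P ` {..<Suc j} = pg P ` cand N j (H j)"
  proof -
    have "Cc - pg P ` {..<Suc j} = pg P ` (({..<N} - H j) - {..<Suc j})"
      unfolding Cc by (rule inj_on_image_set_diff[OF pg_inj, symmetric]) (use jk in auto)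
    also have "({..<N} - H j) - {..<Suc j} = cand N j (H j)" unfolding cand_def by auto
    finally show ?thesis .
  qed
  have cne: "cand N j (H j) \<noteq> {}"
  proof
    assume e: "cand N j (H j) = {}"
    then have "{j<..<N} \<subseteq> H j - {j}" unfolding cand_def by auto
    then have "card {j<..<N} \<le> card (H j - {j})" using hg by (intro card_mono) auto
    then show False using hg jH jk r1 by (simp; linarith)
  qed
  define w where "w = avic N j (H j)"
  have iw: "isvic N j (H j) w" unfolding w_def by (rule avic_isvic[OF cne])
  have candp: "\<And>q. q \<in> cand N j (H j) \<Longrightarrow> j < q \<and> q < N \<and> q \<notin> H j" unfolding cand_def by auto
  let ?dm = "dist_marked N (pg P ` {..<Suc j})"
  have dmv: "\<And>q. q \<in> cand N j (H j) \<Longrightarrow> ?dm (pg P q) = gval N j q"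
    using candp dist_pg by blast
  have Lv: "\<And>q q'. q \<in> cand N j (H j) \<Longrightarrow> q' \<in> cand N j (H j) \<Longrightarrow> (L (pg P q) \<le> L (pg P q')) = (q \<le> q')"
  proof -
    fix q q' assume a: "q \<in> cand N j (H j)" "q' \<in> cand N j (H j)"
    have "L (pg P q) + N = k*P + q" "L (pg P q') + N = k*P + q'" using a candp Lc by (auto simp: less_imp_le)
    then show "(L (pg P q) \<le> L (pg P q')) = (q \<le> q')" by linarith
  qed
  let ?Q = "\<lambda>v. v \<in> Cc - pg P ` {..<Suc j} \<and>
      (\<forall>u \<in> Cc - pg P ` {..<Suc j}. ?dm u < ?dm v \<or> (?dm u = ?dm v \<and> L v \<le> L u))"
  have Qw: "?Q (pg P w)"
    unfolding CM using iw unfolding isvic_def using dmv Lv by (auto)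
  have uniq: "\<And>v. ?Q v \<Longrightarrow> v = pg P w"
  proof -
    fix v assume q: "?Q v"
    then obtain ov where ov: "ov \<in> cand N j (H j)" "v = pg P ov" unfolding CM by auto
    have "isvic N j (H j) ov" unfolding isvic_def
    proof (intro conjI ballI ov(1))
      fix u assume u: "u \<in> cand N j (H j)"
      then have "pg P u \<in> Cc - pg P ` {..<Suc j}" unfolding CM by auto
      then have "?dm (pg P u) < ?dm v \<or> (?dm (pg P u) = ?dm v \<and> L v \<le> L (pg P u))" using q by blast
      then show "gval N j u < gval N j ov \<or> gval N j u = gval N j ov \<and> ov \<le> u"
        using dmv[OF u] dmv[OF ov(1)] Lv[OF ov(1) u] ov(2) by auto
    qed
    then show "v = pg P w" using isvic_unique[OF _ iw] ov(2) by simp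
  qed
  show ?thesis unfolding far_victim_def w_def[symmetric]
    using Qw uniq by (rule some_equality)
qed

end


context setting begin

lemma Hk: "H k = {k..<N}"
proof -
  have a: "H k \<subseteq> {k..<N}" "finite (H k)" "card (H k) = r" using Hgen[of k] by auto
  have "card {k..<N} = r" using r2 by simp
  then show ?thesis using a by (metis card_subset_eq finite_atLeastLessThan)
qed

lemma pg_inj_eq: "a < N \<Longrightarrow> b < N \<Longrightarrow> (pg P a = pg P b) = (a = b)"
  using pg_inj[of P] by (auto dest: inj_onD)

lemma card_C: "j \<le> k \<Longrightarrow> card (pg P ` ({..<N} - H j)) = k"
proof -
  assume j: "j \<le> k"
  have "card (pg P ` ({..<N} - H j)) = card ({..<N} - H j)"
    by (rule card_image) (rule inj_on_subset[OF pg_inj], auto)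
  also have "\<dots> = N - r" using Hgen[OF j] by (subst card_Diff_subset) auto
  finally show ?thesis .
qed

lemma step_inv:
  assumes inv: "INV P j (Cc, M, L, t)" and jk: "j < k"
  shows "snd (far_step k N (Cc,M,L,t) (pg P j)) = (j \<in> H j)
       \<and> INV P (Suc j) (fst (far_step k N (Cc,M,L,t) (pg P j)))"
proof -
  have t: "t = k*P + j" and Cc: "Cc = pg P ` ({..<N} - H j)"
    and M: "M = (if j = 0 then Cc else pg P ` {..<j})"
    and L1: "\<And>q. q < N \<Longrightarrow> q \<notin> H j \<Longrightarrow> q < j \<Longrightarrow> L (pg P q) = k*P + q"
    and L2: "\<And>q. q < N \<Longrightarrow> q \<notin> H j \<Longrightarrow> j \<le> q \<Longrightarrow> L (pg P q) + N = k*P + q"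
    using inv by (auto simp: INV_def)
  have jN: "j < N" using jk by simp
  have hg: "H j \<subseteq> {j..<N}" "finite (H j)" "card (H j) = r" using Hgen jk by auto
  let ?p = "pg P j"
  have pin: "(?p \<in> Cc) = (j \<notin> H j)"
    unfolding Cc using pg_inj_eq jN by auto
  have j0: "0 \<in> H 0" using r1 by simp
  show ?thesis
  proof (cases "j \<in> H j")
    case False
    have jne: "j \<noteq> 0"
    proof
      assume "j = 0" then show False using False j0 by simp
    qed
    have fs: "far_step k N (Cc,M,L,t) ?p = ((Cc, insert ?p M, L(?p := t), Suc t), False)"
      using pin False by (simp add: far_step_def)
    have HS: "H (Suc j) = H j" using False by simp
    have "INV P (Suc j) (Cc, insert ?p M, L(?p := t), Suc t)"
      unfolding INV_def prod.case
    proof (intro conjI allI impI)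
      show "Suc t = k * P + Suc j" using t by simp
      show "Cc = pg P ` ({..<N} - H (Suc j))" using Cc HS by simp
      show "insert ?p M = (if Suc j = 0 then Cc else pg P ` {..<Suc j})"
        using M jne by (simp add: lessThan_Suc)
    next
      fix q assume q: "q < N" "q \<notin> H (Suc j)" "q < Suc j"
      show "(L(?p := t)) (pg P q) = k * P + q"
      proof (cases "q = j")
        case True then show ?thesis using t by simp
      next
        case False
        then have "pg P q \<noteq> ?p" using pg_inj_eq q jN by auto
        then show ?thesis using L1 q HS False by auto
      qed
    next
      fix q assume q: "q < N" "q \<notin> H (Suc j)" "Suc j \<le> q"
      then have "pg P q \<noteq> ?p" using pg_inj_eq q jN by auto
      then show "(L(?p := t)) (pg P q) + N = k * P + q" using L2 q HS by auto
    qed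
    then show ?thesis using fs False by simp
  next
    case True
    have cardC: "card Cc = k" using Cc card_C jk by simp
    have M1: "insert ?p (if Cc \<subseteq> M then {} else M) = pg P ` {..<Suc j}"
    proof (cases "j = 0")
      case True then show ?thesis using M by (simp add: lessThan_Suc)
    next
      case False
      have "\<not> Cc \<subseteq> M"
      proof
        assume "Cc \<subseteq> M"
        then have "card Cc \<le> card M" using M False by (intro card_mono) auto
        also have "card M \<le> j" using M False card_image_le[of "{..<j}" "pg P"] by simp
        finally show False using cardC jk by simp
      qed
      then show ?thesis using M False by (simp add: lessThan_Suc)
    qed
    define w where "w = avic N j (H j)"
    have vic: "far_victim N Cc (pg P ` {..<Suc j}) L = pg P w"
      unfolding w_def by (rule victim[OF inv jk True])
    have cne: "cand N j (H j) \<noteq> {}"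
    proof
      assume e: "cand N j (H j) = {}"
      then have "{j<..<N} \<subseteq> H j - {j}" unfolding cand_def by auto
      then have "card {j<..<N} \<le> card (H j - {j})" using hg by (intro card_mono) auto
      then show False using hg True jk r1 by (simp; linarith)
    qed
    have wc: "w \<in> cand N j (H j)" using avic_isvic[OF cne] unfolding w_def isvic_def by blast
    then have w: "j < w" "w < N" "w \<notin> H j" unfolding cand_def by auto
    have HS: "H (Suc j) = insert w (H j - {j})" using True w_def by simp
    have fs: "far_step k N (Cc,M,L,t) ?p
       = ((insert ?p (Cc - {pg P w}), pg P ` {..<Suc j}, L(?p := t), Suc t), True)"
      using pin True cardC M1 vic by (simp add: far_step_def Let_def)
    have "INV P (Suc j) (insert ?p (Cc - {pg P w}), pg P ` {..<Suc j}, L(?p := t), Suc t)"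
      unfolding INV_def prod.case
    proof (intro conjI allI impI)
      show "Suc t = k * P + Suc j" using t by simp
      have "{..<N} - H (Suc j) = insert j (({..<N} - H j) - {w})" using HS w jN True by auto
      then have "pg P ` ({..<N} - H (Suc j)) = insert ?p (pg P ` (({..<N} - H j) - {w}))" by simp
      also have "pg P ` (({..<N} - H j) - {w}) = Cc - {pg P w}"
        unfolding Cc using inj_on_image_set_diff[OF pg_inj, of "{..<N} - H j" "{w}" P] w by auto
      finally show "insert ?p (Cc - {pg P w}) = pg P ` ({..<N} - H (Suc j))" by simp
      show "pg P ` {..<Suc j} = (if Suc j = 0 then insert ?p (Cc - {pg P w}) else pg P ` {..<Suc j})"
        by simp
    next
      fix q assume q: "q < N" "q \<notin> H (Suc j)" "q < Suc j"
      show "(L(?p := t)) (pg P q) = k * P + q"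
      proof (cases "q = j")
        case True then show ?thesis using t by simp
      next
        case False
        then have "pg P q \<noteq> ?p" using pg_inj_eq q jN by auto
        moreover have "q \<notin> H j" using q HS False by auto
        ultimately show ?thesis using L1 q False by auto
      qed
    next
      fix q assume q: "q < N" "q \<notin> H (Suc j)" "Suc j \<le> q"
      then have "pg P q \<noteq> ?p" using pg_inj_eq q jN by auto
      moreover have "q \<notin> H j" using q HS by auto
      ultimately show "(L(?p := t)) (pg P q) + N = k * P + q" using L2 q by auto
    qed
    then show ?thesis using fs True by simp
  qed
qed

end


context setting begin

definition req :: "nat \<Rightarrow> nat" where "req T = T mod N + 1"

definition FP :: "nat \<Rightarrow> far_state \<Rightarrow> bool" where
  "FP T s = (case s of (Cc, M, L, t) \<Rightarrow> t = T \<and> Cc = {1..T} \<and> M = Cc \<and> (\<forall>p\<in>{1..T}. L p = p - 1))"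

definition Good :: "nat \<Rightarrow> far_state \<Rightarrow> bool" where
  "Good T s = (if T < k then FP T s else INV (T div k) (T mod k) s)"

definition fl :: "nat \<Rightarrow> bool" where
  "fl T = (T < k \<or> T mod k \<in> H (T mod k))"

lemma fp_step:
  assumes "FP T s" "T < k"
  shows "snd (far_step k N s (req T)) = True \<and> FP (Suc T) (fst (far_step k N s (req T)))"
proof -
  obtain Cc M L t where s: "s = (Cc, M, L, t)" by (cases s) auto
  have st: "t = T" "Cc = {1..T}" "M = Cc" "\<forall>p\<in>{1..T}. L p = p - 1" using assms(1) s by (auto simp: FP_def)
  have TN: "T < N" using assms(2) by simp
  have rq: "req T = Suc T" using TN by (simp add: req_def)
  have fs: "far_step k N s (req T) = ((insert (Suc T) Cc, insert (Suc T) M, L(Suc T := t), Suc t), True)"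
    using st assms(2) by (simp add: far_step_def s rq)
  show ?thesis unfolding fs using st by (auto simp: FP_def)
qed

lemma fp_inv: "FP k s \<Longrightarrow> INV 1 0 s"
proof -
  assume a: "FP k s"
  obtain Cc M L t where s: "s = (Cc, M, L, t)" by (cases s) auto
  have st: "t = k" "Cc = {1..k}" "M = Cc" "\<And>p. p\<in>{1..k} \<Longrightarrow> L p = p - 1" using a s by (auto simp: FP_def)
  have kmod: "(k*1) mod N = k" using r1 r2 by simp
  have pg1: "\<And>q. r \<le> q \<Longrightarrow> q < N \<Longrightarrow> pg 1 q = q - r + 1"
    using pg_eq kmod r2 by auto
  have img: "pg 1 ` ({..<N} - H 0) = {1..k}"
  proof
    show "pg 1 ` ({..<N} - H 0) \<subseteq> {1..k}" using pg1 by auto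
    show "{1..k} \<subseteq> pg 1 ` ({..<N} - H 0)"
    proof
      fix p assume p: "p \<in> {1..k}"
      then have "p = pg 1 (p - 1 + r)" using pg1[of "p - 1 + r"] by auto
      moreover have "p - 1 + r \<in> {..<N} - H 0" using p by auto
      ultimately show "p \<in> pg 1 ` ({..<N} - H 0)" by blast
    qed
  qed
  show ?thesis unfolding s INV_def prod.case
  proof (intro conjI allI impI)
    show "t = k * 1 + 0" using st by simp
    show "Cc = pg 1 ` ({..<N} - H 0)" using img st by simp
    show "M = (if 0 = 0 then Cc else pg 1 ` {..<0})" using st by simp
  next
    fix q assume "q < N" "q \<notin> H 0" "q < 0" then show "L (pg 1 q) = k * 1 + q" by simp
  next
    fix q assume q: "q < N" "q \<notin> H 0" "0 \<le> q"
    then have "r \<le> q" by simp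
    then show "L (pg 1 q) + N = k * 1 + q" using pg1 q st(4)[of "q - r + 1"] by auto
  qed
qed

lemma pg_shift: "r \<le> q \<Longrightarrow> pg (Suc P) q = pg P (q - r)"
proof -
  assume q: "r \<le> q"
  have "k * Suc P = k*P + k" by simp
  then have "q + k * Suc P = (q - r + k*P) + N" using q r2 by arith
  then have "(q + k*Suc P) mod N = (q - r + k*P) mod N" by (metis mod_add_self2)
  then show ?thesis unfolding pg_def by simp
qed

lemma inv_next: "INV P k s \<Longrightarrow> INV (Suc P) 0 s"
proof -
  assume a: "INV P k s"
  obtain Cc M L t where s: "s = (Cc, M, L, t)" by (cases s) auto
  have st: "t = k*P + k" "Cc = pg P ` ({..<N} - H k)" "M = pg P ` {..<k}"
    and L1: "\<And>q. q < N \<Longrightarrow> q \<notin> H k \<Longrightarrow> q < k \<Longrightarrow> L (pg P q) = k*P + q"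
    using a s kN by (auto simp: INV_def)
  have "{..<N} - {k..<N} = {..<k}" by auto
  then have Ck: "Cc = pg P ` {..<k}" using st(2) Hk by simp
  have img: "pg (Suc P) ` ({..<N} - H 0) = pg P ` {..<k}"
  proof
    show "pg (Suc P) ` ({..<N} - H 0) \<subseteq> pg P ` {..<k}" using pg_shift by auto
    show "pg P ` {..<k} \<subseteq> pg (Suc P) ` ({..<N} - H 0)"
    proof
      fix p assume "p \<in> pg P ` {..<k}"
      then obtain q where q: "q < k" "p = pg P q" by auto
      then have "p = pg (Suc P) (q + r)" using pg_shift[of "q + r" P] by simp
      moreover have "q + r \<in> {..<N} - H 0" using q by auto
      ultimately show "p \<in> pg (Suc P) ` ({..<N} - H 0)" by blast
    qed
  qed
  show ?thesis unfolding s INV_def prod.case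
  proof (intro conjI allI impI)
    show "t = k * Suc P + 0" using st by simp
    show "Cc = pg (Suc P) ` ({..<N} - H 0)" using img Ck by simp
    show "M = (if 0 = 0 then Cc else pg (Suc P) ` {..<0})" using st Ck by simp
  next
    fix q assume "q < N" "q \<notin> H 0" "q < 0" then show "L (pg (Suc P) q) = k * Suc P + q" by simp
  next
    fix q assume q: "q < N" "q \<notin> H 0" "0 \<le> q"
    then have rq: "r \<le> q" by simp
    then have "L (pg (Suc P) q) = k*P + (q - r)" using pg_shift L1[of "q - r"] q Hk by auto
    then show "L (pg (Suc P) q) + N = k * Suc P + q" using rq r2 by simp
  qed
qed

lemma good_step:
  assumes "Good T s"
  shows "snd (far_step k N s (req T)) = fl T \<and> Good (Suc T) (fst (far_step k N s (req T)))"
proof (cases "T < k")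
  case True
  have fp: "FP T s" using assms True by (simp add: Good_def)
  have a: "snd (far_step k N s (req T)) = True" "FP (Suc T) (fst (far_step k N s (req T)))"
    using fp_step[OF fp True] by auto
  have "Good (Suc T) (fst (far_step k N s (req T)))"
  proof (cases "Suc T < k")
    case True then show ?thesis using a by (simp add: Good_def)
  next
    case False
    then have "Suc T = k" using \<open>T < k\<close> by simp
    then show ?thesis using a fp_inv[of "fst (far_step k N s (req T))"] kN by (simp add: Good_def)
  qed
  then show ?thesis using a True by (simp add: fl_def)
next
  case False
  define P where "P = T div k"
  define j where "j = T mod k"
  have T: "T = k*P + j" unfolding P_def j_def by simp
  have jk: "j < k" unfolding j_def using kN by simp
  have inv: "INV P j s" using assms False by (simp add: Good_def P_def j_def)
  obtain Cc M L t where s: "s = (Cc, M, L, t)" by (cases s) auto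
  have rq: "req T = pg P j" unfolding req_def pg_def T by (simp add: add.commute)
  have st: "snd (far_step k N s (req T)) = (j \<in> H j)" "INV P (Suc j) (fst (far_step k N s (req T)))"
    using step_inv[of P j Cc M L t] inv jk s rq by auto
  have f: "fl T = (j \<in> H j)" using False by (simp add: fl_def j_def)
  have "Good (Suc T) (fst (far_step k N s (req T)))"
  proof (cases "Suc j < k")
    case True
    have "Suc T = Suc j + k*P" using T by simp
    moreover have "(Suc j + k*P) div k = P + Suc j div k" by (rule div_mult_self2) (use kN in simp)
    moreover have "(Suc j + k*P) mod k = Suc j mod k" by (rule mod_mult_self2)
    ultimately have "Suc T div k = P" "Suc T mod k = Suc j" using True by simp_all
    then show ?thesis using st(2) False by (simp add: Good_def)
  next
    case False
    then have jk': "Suc j = k" using jk by simp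
    have e: "Suc T = k * Suc P" using T jk' by simp
    have d1: "(k * Suc P) div k = Suc P" by (rule nonzero_mult_div_cancel_left) (use kN in simp)
    have m1: "(k * Suc P) mod k = 0" by (rule mod_mult_self1_is_0)
    have "Suc T div k = Suc P" "Suc T mod k = 0" using d1 m1 e by (simp_all only:)
    moreover have "INV (Suc P) 0 (fst (far_step k N s (req T)))" using inv_next st(2) jk' by simp
    ultimately show ?thesis using \<open>\<not> T < k\<close> by (simp add: Good_def)
  qed
  then show ?thesis using st f by simp
qed

lemma run: "Good T s \<Longrightarrow> T \<le> m \<Longrightarrow> far_run k N s (map req [T..<m]) = map fl [T..<m]"
proof (induction "m - T" arbitrary: T s)
  case 0 then show ?case by simp
next
  case (Suc d)
  then have Tm: "T < m" by simp
  have e: "[T..<m] = T # [Suc T..<m]" using Tm upt_conv_Cons by blast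
  obtain s' f where sf: "far_step k N s (req T) = (s', f)" by (cases "far_step k N s (req T)") auto
  have g: "f = fl T" "Good (Suc T) s'" using good_step[OF Suc.prems(1)] sf by auto
  have "far_run k N s' (map req [Suc T..<m]) = map fl [Suc T..<m]"
    using Suc.hyps(1)[of "Suc T" s'] Suc.hyps(2) g(2) Tm by simp
  then show ?case using e sf g by simp
qed

lemma good0: "Good 0 far_init"
  using kN by (simp add: Good_def FP_def far_init_def)

end


lemma concat_rep_nth: "T < n * length xs \<Longrightarrow> concat (replicate n xs) ! T = xs ! (T mod length xs)"
proof (induction n arbitrary: T)
  case 0 then show ?case by simp
next
  case (Suc n)
  show ?case
  proof (cases "T < length xs")
    case True then show ?thesis by (simp add: nth_append)
  next
    case False
    then have "T - length xs < n * length xs" using Suc.prems by simp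
    then have "concat (replicate n xs) ! (T - length xs) = xs ! ((T - length xs) mod length xs)"
      using Suc.IH by blast
    moreover have "(T - length xs) mod length xs = T mod length xs" using False
      by (simp add: le_mod_geq)
    ultimately show ?thesis using False by (simp add: nth_append)
  qed
qed

lemma I_eq: "0 < N \<Longrightarrow> concat (replicate n [1..<N+1]) = map (\<lambda>T. T mod N + 1) [0..<n*N]"
proof (rule nth_equalityI)
  assume N: "0 < N"
  show "length (concat (replicate n [1..<N+1])) = length (map (\<lambda>T. T mod N + 1) [0..<n*N])"
    by (simp add: length_concat sum_list_replicate del: upt_Suc)
  fix i assume "i < length (concat (replicate n [1..<N+1]))"
  then have i: "i < n * N" by (simp add: length_concat sum_list_replicate del: upt_Suc)
  have "concat (replicate n [1..<N+1]) ! i = [1..<N+1] ! (i mod N)"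
    using concat_rep_nth[of i n "[1..<N+1]"] i by (simp del: upt_Suc)
  also have "\<dots> = i mod N + 1" using N by (simp del: upt_Suc)
  finally show "concat (replicate n [1..<N+1]) ! i = map (\<lambda>T. T mod N + 1) [0..<n*N] ! i" using i by simp
qed

fun chunks :: "nat \<Rightarrow> 'a list \<Rightarrow> 'a list list" where
  "chunks k xs = (if xs = [] \<or> k = 0 then [] else take k xs # chunks k (drop k xs))"
declare chunks.simps[simp del]

definition wd :: "nat \<Rightarrow> 'a list \<Rightarrow> bool" where
  "wd k ys = (\<forall>i j. i < j \<longrightarrow> j < length ys \<longrightarrow> j \<le> i + k \<longrightarrow> ys!i \<noteq> ys!j)"

lemma wd_drop: "wd k ys \<Longrightarrow> wd k (drop m ys)"
  unfolding wd_def
proof (intro allI impI)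
  fix i j assume w: "\<forall>i j. i < j \<longrightarrow> j < length ys \<longrightarrow> j \<le> i + k \<longrightarrow> ys ! i \<noteq> ys ! j"
    and a: "i < j" "j < length (drop m ys)" "j \<le> i + k"
  have "ys ! (m + i) \<noteq> ys ! (m + j)" using w a by simp
  then show "drop m ys ! i \<noteq> drop m ys ! j" using a by simp
qed

lemma wd_distinct: "wd k ys \<Longrightarrow> m \<le> k + 1 \<Longrightarrow> distinct (take m ys)"
  unfolding distinct_conv_nth
proof (intro allI impI)
  fix i j assume w: "wd k ys" and m: "m \<le> k + 1" and a: "i < length (take m ys)" "j < length (take m ys)" "i \<noteq> j"
  show "take m ys ! i \<noteq> take m ys ! j"
  proof (cases "i < j")
    case True
    then have "ys ! i \<noteq> ys ! j" using w a m unfolding wd_def by auto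
    then show ?thesis using a by simp
  next
    case False
    then have "j < i" using a by simp
    then have "ys ! j \<noteq> ys ! i" using w a m unfolding wd_def by auto
    then show ?thesis using a by simp
  qed
qed


lemma chunks_Nil[simp]: "chunks k [] = []" by (simp add: chunks.simps)

lemma chunks_Cons: "xs \<noteq> [] \<Longrightarrow> 0 < k \<Longrightarrow> chunks k xs = take k xs # chunks k (drop k xs)"
  by (simp add: chunks.simps)

lemma split_chunks:
  "0 < k \<Longrightarrow> 0 < length cur \<Longrightarrow> length cur \<le> k \<Longrightarrow> wd k (cur @ xs)
   \<Longrightarrow> split_phases k cur xs = chunks k (cur @ xs)"
proof (induction xs arbitrary: cur)
  case Nil
  have "chunks k cur = [cur]" using Nil chunks_Cons[of cur k] by auto
  then show ?case using Nil by simp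
next
  case (Cons x xs)
  have e: "take (Suc (length cur)) (cur @ x # xs) = cur @ [x]" by simp
  have d: "distinct (cur @ [x])"
    using wd_distinct[OF Cons.prems(4), of "Suc (length cur)"] Cons.prems(3) unfolding e by simp
  then have "distinct (x # cur)" by simp
  then have cardc: "card (set (x # cur)) = Suc (length cur)" using distinct_card by fastforce
  show ?case
  proof (cases "length cur < k")
    case True
    then have "split_phases k cur (x # xs) = split_phases k (cur @ [x]) xs" using cardc by simp
    also have "\<dots> = chunks k ((cur @ [x]) @ xs)"
      using Cons.IH[of "cur @ [x]"] Cons.prems True by simp
    finally show ?thesis by simp
  next
    case False
    then have lk: "length cur = k" using Cons.prems by simp
    then have "split_phases k cur (x # xs) = cur # split_phases k [x] xs" using cardc by simp
    also have "split_phases k [x] xs = chunks k ([x] @ xs)"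
    proof -
      have "wd k (drop k (cur @ x # xs))" using wd_drop Cons.prems(4) by blast
      then show ?thesis using Cons.IH[of "[x]"] Cons.prems lk by simp
    qed
    moreover have "chunks k (cur @ x # xs) = cur # chunks k (x # xs)"
      using chunks_Cons[of "cur @ x # xs" k] lk Cons.prems by simp
    ultimately show ?thesis by simp
  qed
qed

lemma kph_chunks: "0 < k \<Longrightarrow> wd k I \<Longrightarrow> k_phases k I = chunks k I"
proof (cases I)
  case Nil then show ?thesis by (simp add: k_phases_def)
next
  case (Cons y ys)
  assume k: "0 < k" and w: "wd k I"
  have "k_phases k I = split_phases k [y] ys" using k Cons by (simp add: k_phases_def)
  also have "\<dots> = chunks k ([y] @ ys)" using split_chunks[of k "[y]" ys] k w Cons by simp
  finally show ?thesis using Cons by simp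
qed

lemma chop_len: "length (chop_by ls ys) = length ls"
  by (induction ls arbitrary: ys) auto

lemma chop_chunks: "0 < k \<Longrightarrow> length ys = length xs \<Longrightarrow> chop_by (map length (chunks k xs)) ys = chunks k ys"
proof (induction k xs arbitrary: ys rule: chunks.induct)
  case (1 k xs)
  show ?case
  proof (cases "xs = []")
    case True then show ?thesis using 1 by simp
  next
    case False
    then have ys: "ys \<noteq> []" using 1 by auto
    have "chop_by (map length (chunks k xs)) ys
        = take k ys # chop_by (map length (chunks k (drop k xs))) (drop k ys)"
      using chunks_Cons[OF False] 1(2,3) by (simp add: min_def)
    also have "chop_by (map length (chunks k (drop k xs))) (drop k ys) = chunks k (drop k ys)"
      using 1 False by simp
    finally show ?thesis using chunks_Cons[OF ys] 1(2) by simp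
  qed
qed

lemma chunks_nth: "0 < k \<Longrightarrow> i < length (chunks k xs) \<Longrightarrow> chunks k xs ! i = take k (drop (k*i) xs) \<and> k*i < length xs"
proof (induction k xs arbitrary: i rule: chunks.induct)
  case (1 k xs)
  show ?case
  proof (cases "xs = []")
    case True then show ?thesis using 1 by simp
  next
    case False
    show ?thesis
    proof (cases i)
      case 0 then show ?thesis using chunks_Cons[OF False] 1(2) False by simp
    next
      case (Suc i')
      have "i' < length (chunks k (drop k xs))" using 1(3) chunks_Cons[OF False] 1(2) Suc by simp
      then have "chunks k (drop k xs) ! i' = take k (drop (k*i') (drop k xs)) \<and> k*i' < length (drop k xs)"
        using 1(1) False 1(2) by simp
      then show ?thesis using chunks_Cons[OF False] 1(2) Suc by (simp add: add.commute; arith)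
    qed
  qed
qed



context setting begin

lemma fl_ge: "1 \<le> P \<Longrightarrow> j < k \<Longrightarrow> fl (k*P + j) = (j \<in> H j)"
proof -
  assume P: "1 \<le> P" and j: "j < k"
  have "(j + k*P) mod k = j mod k" by (rule mod_mult_self2)
  then have m: "(k*P + j) mod k = j" using j by (simp add: add.commute)
  have "k*1 \<le> k*P" using P by (rule mult_left_mono) simp
  then have nl: "\<not> k*P + j < k" by linarith
  show ?thesis unfolding fl_def using m nl by simp
qed

lemma seg: "1 \<le> P \<Longrightarrow> j \<le> k \<Longrightarrow> length (filter id (map fl [k*P..<k*P+j])) = C j"
proof (induction j)
  case 0 then show ?case by simp
next
  case (Suc j)
  have "[k*P..<k*P + Suc j] = [k*P..<k*P+j] @ [k*P+j]" by simp
  then show ?case using Suc fl_ge[of P j] by simp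
qed

lemma first: "length (filter id (map fl [0..<k])) = k"
proof -
  have "filter id (map fl [0..<k]) = map fl [0..<k]" by (rule filter_True) (auto simp: fl_def)
  then have "length (filter id (map fl [0..<k])) = length (map fl [0..<k])" by (rule arg_cong)
  then show ?thesis by (simp only: length_map length_upt diff_zero)
qed

lemma total: "length (filter id (map fl [0..<k*Suc Q])) = k + Q * C k"
proof (induction Q)
  case 0
  have "k * Suc 0 = k" by simp
  then show ?case using first by (metis add.right_neutral mult_zero_left)
next
  case (Suc Q)
  have e: "k * Suc (Suc Q) = k*Suc Q + k" by simp
  have u: "[0..<k*Suc Q + k] = [0..<k*Suc Q] @ [k*Suc Q..<k*Suc Q + k]" by (rule upt_add_eq_append) simp
  have "length (filter id (map fl [0..<k*Suc (Suc Q)])) = length (filter id (map fl [0..<k*Suc Q])) + length (filter id (map fl [k*Suc Q..<k*Suc Q + k]))"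
    unfolding e u by simp
  also have "\<dots> = (k + Q * C k) + C k"
  proof -
    have s2: "length (filter id (map fl [k*Suc Q..<k*Suc Q + k])) = C k" by (rule seg) simp_all
    show ?thesis by (simp only: Suc.IH s2)
  qed
  finally have A: "length (filter id (map fl [0..<k*Suc (Suc Q)])) = (k + Q * C k) + C k" .
  have B: "k + Suc Q * C k = (k + Q * C k) + C k" by simp
  show ?case unfolding B by (rule A)
qed

lemma req_eq: "req = (\<lambda>T. T mod N + 1)" by (simp add: req_def fun_eq_iff)

lemma main:
  assumes n: "1 \<le> n"
  defines "I \<equiv> concat (replicate n [1..<N+1])"
  shows "(\<forall>i. 0 < i \<and> i + 1 < length (k_phases k I) \<longrightarrow> phase_faults k N I ! i = C k)
     \<and> FAR k N I = k + (n*N div k - 1) * C k + C (n*N mod k)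
     \<and> C (n*N mod k) + 1 \<le> C k \<and> 1 \<le> n*N div k"
proof -
  have I: "I = map req [0..<n*N]" unfolding I_def req_eq using I_eq N1 by simp
  have F: "far_faults k N I = map fl [0..<n*N]"
    unfolding far_faults_def I using run[OF good0] by simp
  have w: "wd k I"
    unfolding wd_def
  proof (intro allI impI)
    fix i j assume a: "i < j" "j < length I" "j \<le> i + k"
    have jn: "j < n*N" using a I by simp
    have "i mod N \<noteq> j mod N"
    proof
      assume e: "i mod N = j mod N"
      then have "N dvd (j - i)" using a(1) mod_eq_dvd_iff_nat[of i j N] by simp
      moreover have "0 < j - i" using a by simp
      moreover have "j - i < N" using a r1 r2 by arith
      ultimately show False using nat_dvd_not_less by blast
    qed
    then show "I ! i \<noteq> I ! j" using I a jn by (simp add: req_def)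
  qed
  have kp: "k_phases k I = chunks k I" using kph_chunks[OF _ w] kN by simp
  have lenF: "length (far_faults k N I) = length I" using F I by simp
  have pf: "phase_faults k N I = map (\<lambda>c. length (filter id c)) (chunks k (far_faults k N I))"
    unfolding phase_faults_def kp using chop_chunks[OF _ lenF] kN by simp
  have lenC: "length (chunks k (far_faults k N I)) = length (chunks k I)"
    using chop_chunks[OF _ lenF] chop_len[of "map length (chunks k I)" "far_faults k N I"] kN by simp
  have part1: "\<forall>i. 0 < i \<and> i + 1 < length (k_phases k I) \<longrightarrow> phase_faults k N I ! i = C k"
  proof (intro allI impI)
    fix i assume a: "0 < i \<and> i + 1 < length (k_phases k I)"
    then have i1: "Suc i < length (chunks k (far_faults k N I))" using kp lenC by simp
    have b: "k * Suc i < length (far_faults k N I)" using chunks_nth[OF _ i1] kN by simp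
    have c: "chunks k (far_faults k N I) ! i = take k (drop (k*i) (far_faults k N I))"
      using chunks_nth[of k i "far_faults k N I"] i1 kN by simp
    have le: "k*i + k \<le> n*N" using b F by simp
    have d: "take k (drop (k*i) (far_faults k N I)) = map fl [k*i..<k*i+k]"
      unfolding F using le by (simp add: drop_map take_map)
    have "phase_faults k N I ! i = length (filter id (map fl [k*i..<k*i+k]))"
      unfolding pf using i1 c d by simp
    also have "\<dots> = C k" using seg[of i k] a by (simp add: mult.commute)
    finally show "phase_faults k N I ! i = C k" .
  qed
  define q where "q = n*N div k"
  define m where "m = n*N mod k"
  have q1: "1 \<le> q"
  proof -
    have "N \<le> n*N" using mult_le_mono1[OF n, of N] by simp
    then have "k \<le> n*N" using le_trans[OF diff_le_self[of N r]] by blast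
    then have "k div k \<le> n*N div k" by (rule div_le_mono)
    then show ?thesis unfolding q_def using kN by simp
  qed
  have nm: "n*N = k*Suc (q - 1) + m" using q1 unfolding q_def m_def by simp
  have mk: "m < k" unfolding m_def using kN by simp
  have "[0..<n*N] = [0..<k*Suc (q-1)] @ [k*Suc (q-1)..<k*Suc (q-1) + m]"
    unfolding nm by (rule upt_add_eq_append) simp
  then have "FAR k N I = (k + (q - 1) * C k) + C m"
    unfolding FAR_def F using total[of "q - 1"] seg[of "Suc (q-1)" m] mk r2 by (simp; arith)
  moreover have "C m + 1 \<le> C k"
  proof -
    have "C m \<le> C (k - 1)" using cnt_mono mk by simp
    moreover have "C k = C (k - 1) + 1"
    proof -
      obtain k' where k': "k = Suc k'" using kN(2) by (cases k) auto
      have lf: "k' \<in> H k'" using last_fault k' by simp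
      have "C (Suc k') = C k' + 1" using lf by simp
      then show ?thesis using k' by simp
    qed
    ultimately show ?thesis by simp
  qed
  ultimately show ?thesis using part1 q1 unfolding q_def m_def by simp
qed

end


theorem lemma13:
  fixes k r n :: nat
  assumes "k \<ge> 2" and "1 \<le> r" and "r \<le> k - 1" and "n \<ge> 1"
  defines "N \<equiv> k + r"
  defines "x \<equiv> nat \<lfloor>log 2 (real N / real r)\<rfloor>"
  defines "X \<equiv> r * (x - 1) + nat \<lceil>real N / 2 ^ x\<rceil>"
  defines "I \<equiv> concat (replicate n [1..<N + 1])"
  shows "(\<forall>i. 0 < i \<and> i + 1 < length (k_phases k I) \<longrightarrow> phase_faults k N I ! i = X)
       \<and> int (nat \<lfloor>real (n * N) / real k\<rfloor> * X) + int k - int X \<le> int (FAR k N I)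
       \<and> int (FAR k N I) \<le> int (nat \<lfloor>real (n * N) / real k\<rfloor> * X) + int k - 1"
proof -
  have rk: "r < k" using assms(1,3) by linarith
  have r2: "2*r < N" unfolding N_def using rk by simp
  have rpos: "0 < real r" using assms(2) by simp
  define l where "l = log 2 (real N / real r)"
  have qpos: "0 < real N / real r" using rpos r2 by simp
  have l1: "1 < l"
  proof -
    have "real (2 * r) < real N" using r2 by (simp only: of_nat_less_iff)
    then have "2 * real r < real N" by simp
    then have "2 < real N / real r" using rpos by (simp add: pos_less_divide_eq)
    then show ?thesis unfolding l_def using less_log_iff[of 2 "real N / real r" 1] qpos by simp
  qed
  have fx: "real x = of_int \<lfloor>l\<rfloor>" unfolding x_def l_def[symmetric] using l1 by simp
  have p2: "2 powr l = real N / real r" unfolding l_def using qpos by simp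
  have lo: "(2::real)^x \<le> real N / real r"
  proof -
    have "(2::real)^x = 2 powr real x" by (simp add: powr_realpow)
    also have "\<dots> \<le> 2 powr l" using fx by (intro powr_mono) (simp_all add: of_int_floor_le)
    finally show ?thesis using p2 by simp
  qed
  have hi: "real N / real r < (2::real)^(Suc x)"
  proof -
    have "l < real x + 1" using fx by linarith
    then have "2 powr l < 2 powr (real x + 1)" by (intro powr_less_mono) simp_all
    also have "2 powr (real x + 1) = (2::real)^(Suc x)"
    proof -
      have e: "real x + 1 = real (Suc x)" by simp
      show ?thesis unfolding e by (rule powr_realpow) simp
    qed
    finally show ?thesis using p2 by simp
  qed
  have xlo: "r * 2^x \<le> N"
  proof -
    have "real r * 2^x \<le> real N" using lo rpos by (simp add: le_divide_eq mult.commute)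
    then have "real (r * 2^x) \<le> real N" by simp
    then show ?thesis by (simp only: of_nat_le_iff)
  qed
  have xhi: "N < r * 2^(Suc x)"
  proof -
    have "real N < real r * 2^(Suc x)" using hi rpos by (simp add: divide_less_eq mult.commute)
    then have "real N < real (r * 2^(Suc x))" by simp
    then show ?thesis by (simp only: of_nat_less_iff)
  qed
  interpret S: setting N r x
    by unfold_locales (use assms(2) r2 xlo xhi in auto)
  have kk: "N - r = k" unfolding N_def by simp
  have ddx: "nat \<lceil>real N / 2 ^ x\<rceil> = dd N x"
  proof -
    have c: "N \<le> dd N x * 2^x" "(dd N x - 1) * 2^x < N" using dd_char[OF S.N1, of x] by auto
    have d1: "1 \<le> dd N x" using c(1) S.N1 by (cases "dd N x") auto
    have "real N \<le> real (dd N x * 2^x)" using c(1) by (simp only: of_nat_le_iff)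
    then have "real N \<le> real (dd N x) * 2^x" by simp
    then have a: "real N / 2^x \<le> real (dd N x)" by (simp add: divide_le_eq)
    have "real ((dd N x - 1) * 2^x) < real N" using c(2) by (simp only: of_nat_less_iff)
    then have "real (dd N x - 1) * 2^x < real N" by simp
    then have "(real (dd N x) - 1) * 2^x < real N" using d1 by (simp add: of_nat_diff)
    then have b: "real (dd N x) - 1 < real N / 2^x" by (simp add: less_divide_eq)
    have "\<lceil>real N / 2 ^ x\<rceil> = int (dd N x)" using a b by (simp add: ceiling_eq_iff)
    then show ?thesis by simp
  qed
  have X: "X = S.C (N - r)" unfolding X_def ddx using S.cnt_k by simp
  have M: "(\<forall>i. 0 < i \<and> i + 1 < length (k_phases k I) \<longrightarrow> phase_faults k N I ! i = X)
     \<and> FAR k N I = k + (n*N div k - 1) * X + S.C (n*N mod k)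
     \<and> S.C (n*N mod k) + 1 \<le> X \<and> 1 \<le> n*N div k"
    using S.main[OF assms(4)] unfolding I_def X kk by simp
  define q where "q = n*N div k"
  have fq: "nat \<lfloor>real (n * N) / real k\<rfloor> = q"
  proof -
    have "\<lfloor>real (n*N) / real k\<rfloor> = int (n*N div k)" by (rule floor_divide_of_nat_eq)
    then show ?thesis unfolding q_def by (simp only: nat_int)
  qed
  have F: "FAR k N I = k + (q - 1) * X + S.C (n*N mod k)" and b: "S.C (n*N mod k) + 1 \<le> X" and q1: "1 \<le> q"
    using M unfolding q_def by auto
  have qX: "q * X = (q - 1) * X + X" using q1 by (cases q) auto
  show ?thesis unfolding fq
  proof (intro conjI)
    show "\<forall>i. 0 < i \<and> i + 1 < length (k_phases k I) \<longrightarrow> phase_faults k N I ! i = X" using M by blast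
    show "int (q * X) + int k - int X \<le> int (FAR k N I)" unfolding F using qX by simp
    show "int (FAR k N I) \<le> int (q * X) + int k - 1" unfolding F using qX b by simp
  qed
qed


end
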